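(* Let $R$ be a Bézout domain of finite Krull dimension. Then $R$ is radically finite if and only if $R$ is a principal ideal domain.
   Context: All rings are commutative with identity. An ideal $I$ of $R$ is called radically perfect if $\mathrm{ht}(I)=\inf\{n \mid \sqrt{I}=\sqrt{(\theta_1,\dots,\theta_n)} \text{ for some } \theta_1,\dots,\theta_n\in R\}$, and moreover, if $\mathrm{ht}(I)=0$, then $\sqrt{I}=\sqrt{(\theta)}$ for some zero divisor $\theta$ of $R$. A ring $R$ is called radically finite if every prime ideal $P$ of $R$ is radically perfect and, in addition, the set of ideals of $R$ that are generated by $\mathrm{ht}(P)$ elements and have radical $P$ has a maximal member $A$ such that there are only finitely many ideals in any chain of ideals between $A$ and $P$. *)

theory Defs
  imports Main "HOL-Library.Extended_Nat"
begin

definition is_ideal :: "'a::comm_ring_1 set \<Rightarrow> bool" where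
  "is_ideal I \<longleftrightarrow> 0 \<in> I \<and> (\<forall>x\<in>I. \<forall>y\<in>I. x + y \<in> I) \<and> (\<forall>r. \<forall>x\<in>I. r * x \<in> I)"

definition is_prime_ideal :: "'a::comm_ring_1 set \<Rightarrow> bool" where
  "is_prime_ideal P \<longleftrightarrow> is_ideal P \<and> P \<noteq> UNIV \<and> (\<forall>a b. a * b \<in> P \<longrightarrow> a \<in> P \<or> b \<in> P)"

definition gen_ideal :: "'a::comm_ring_1 set \<Rightarrow> 'a set" where
  "gen_ideal S = \<Inter>{I. is_ideal I \<and> S \<subseteq> I}"

definition radical :: "'a::comm_ring_1 set \<Rightarrow> 'a set" where
  "radical I = {x. \<exists>n. x ^ n \<in> I}"

definition zero_divisor :: "'a::comm_ring_1 \<Rightarrow> bool" where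
  "zero_divisor a \<longleftrightarrow> (\<exists>b. b \<noteq> 0 \<and> a * b = 0)"

definition prime_height :: "'a::comm_ring_1 set \<Rightarrow> enat" where
  "prime_height P = (SUP n \<in> {n. \<exists>f :: nat \<Rightarrow> 'a set.
       (\<forall>i\<le>n. is_prime_ideal (f i)) \<and> (\<forall>i<n. f i \<subset> f (Suc i)) \<and> f n = P}. enat n)"

definition ht :: "'a::comm_ring_1 set \<Rightarrow> enat" where
  "ht I = (INF P \<in> {P. is_prime_ideal P \<and> I \<subseteq> P}. prime_height P)"

definition krull_dim :: "'a::comm_ring_1 itself \<Rightarrow> enat" where
  "krull_dim _ = (SUP P \<in> {P :: 'a set. is_prime_ideal P}. prime_height P)"

definition radically_perfect :: "'a::comm_ring_1 set \<Rightarrow> bool" where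
  "radically_perfect I \<longleftrightarrow>
     ht I = (INF n \<in> {n. \<exists>\<theta>s :: 'a list. length \<theta>s = n \<and>
                 radical I = radical (gen_ideal (set \<theta>s))}. enat n) \<and>
     (ht I = 0 \<longrightarrow> (\<exists>\<theta>. zero_divisor \<theta> \<and> radical I = radical (gen_ideal {\<theta>})))"

definition radically_finite :: "'a::comm_ring_1 itself \<Rightarrow> bool" where
  "radically_finite _ \<longleftrightarrow>
     (\<forall>P :: 'a set. is_prime_ideal P \<longrightarrow>
        radically_perfect P \<and>
        (let S = {A. (\<exists>\<theta>s :: 'a list. enat (length \<theta>s) = ht P \<and> A = gen_ideal (set \<theta>s))
                     \<and> radical A = P}
         in \<exists>A\<in>S. \<not> (\<exists>B\<in>S. A \<subset> B) \<and>
              (\<forall>C. C \<subseteq> {J. is_ideal J \<and> A \<subseteq> J \<and> J \<subseteq> P} \<and>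
                   (\<forall>J\<in>C. \<forall>K\<in>C. J \<subseteq> K \<or> K \<subseteq> J) \<longrightarrow> finite C)))"

definition bezout_domain :: "'a::idom itself \<Rightarrow> bool" where
  "bezout_domain _ \<longleftrightarrow> (\<forall>S :: 'a set. finite S \<longrightarrow> (\<exists>d. gen_ideal S = gen_ideal {d}))"

definition principal_ideal_domain :: "'a::idom itself \<Rightarrow> bool" where
  "principal_ideal_domain _ \<longleftrightarrow> (\<forall>I :: 'a set. is_ideal I \<longrightarrow> (\<exists>d. I = gen_ideal {d}))"

end

theory Submission
  imports Defs
begin

lemma ideal_0: "is_ideal I \<Longrightarrow> 0 \<in> I" by (simp add: is_ideal_def)
lemma ideal_add: "is_ideal I \<Longrightarrow> x \<in> I \<Longrightarrow> y \<in> I \<Longrightarrow> x + y \<in> I" by (simp add: is_ideal_def)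
lemma ideal_mult: "is_ideal I \<Longrightarrow> x \<in> I \<Longrightarrow> r * x \<in> I" by (simp add: is_ideal_def)
lemma ideal_mult2: "is_ideal I \<Longrightarrow> x \<in> I \<Longrightarrow> x * r \<in> I"
  by (metis ideal_mult mult.commute)

lemma gen_ideal_is_ideal: "is_ideal (gen_ideal S)"
  unfolding gen_ideal_def is_ideal_def by auto
lemma gen_ideal_sub: "S \<subseteq> gen_ideal S"
  unfolding gen_ideal_def by auto
lemma gen_ideal_least: "is_ideal I \<Longrightarrow> S \<subseteq> I \<Longrightarrow> gen_ideal S \<subseteq> I"
  unfolding gen_ideal_def by auto

lemma gen_single: "gen_ideal {d::'a::comm_ring_1} = range (\<lambda>r. r * d)"
proof
  have "is_ideal (range (\<lambda>r. r * d))"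
    unfolding is_ideal_def
    by (auto simp: distrib_right[symmetric] mult.assoc[symmetric]) (metis mult_zero_left rangeI)
  moreover have "d \<in> range (\<lambda>r. r * d)" by (metis mult_1 rangeI)
  ultimately show "gen_ideal {d} \<subseteq> range (\<lambda>r. r * d)" by (simp add: gen_ideal_least)
  show "range (\<lambda>r. r * d) \<subseteq> gen_ideal {d}"
    using gen_ideal_sub[of "{d}"] gen_ideal_is_ideal[of "{d}"] ideal_mult by blast
qed

lemma gen_empty: "gen_ideal {} = {0::'a::comm_ring_1}"
proof -
  have "is_ideal {0::'a}" by (simp add: is_ideal_def)
  then have "gen_ideal {} \<subseteq> {0::'a}" by (simp add: gen_ideal_least)
  then show ?thesis using ideal_0[OF gen_ideal_is_ideal] by blast
qed

lemma gen_minus0: "gen_ideal S = gen_ideal (S - {0::'a::comm_ring_1})"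
proof
  show "gen_ideal (S - {0}) \<subseteq> gen_ideal S"
    by (meson Diff_subset gen_ideal_is_ideal gen_ideal_least gen_ideal_sub order_trans)
  have "S \<subseteq> gen_ideal (S - {0})"
    using gen_ideal_sub[of "S - {0}"] ideal_0[OF gen_ideal_is_ideal, of "S - {0}"] by blast
  then show "gen_ideal S \<subseteq> gen_ideal (S - {0})" by (simp add: gen_ideal_is_ideal gen_ideal_least)
qed

lemma radical_prime: assumes "is_prime_ideal P" shows "radical P = P"
proof
  show "P \<subseteq> radical P" unfolding radical_def by (auto intro: exI[of _ 1])
  have "x ^ n \<in> P \<Longrightarrow> x \<in> P" for x n
  proof (induction n)
    case 0
    then have "1 \<in> P" by simp
    then have "P = UNIV" using assms unfolding is_prime_ideal_def is_ideal_def
      by (metis UNIV_eq_I mult_1_right)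
    then show ?case using assms by (simp add: is_prime_ideal_def)
  next
    case (Suc n)
    then show ?case using assms unfolding is_prime_ideal_def by auto
  qed
  then show "radical P \<subseteq> P" unfolding radical_def by auto
qed

lemma radical_mono: "I \<subseteq> J \<Longrightarrow> radical I \<subseteq> radical J"
  unfolding radical_def by auto
lemma radical_sub: "I \<subseteq> radical I"
  unfolding radical_def by (auto intro: exI[of _ 1])
lemma radical_zero: "radical {0::'a::idom} = {0}"
  unfolding radical_def by auto

lemma kaplansky:
  assumes "\<forall>P::'a::idom set. is_prime_ideal P \<longrightarrow> (\<exists>d. P = gen_ideal {d})"
  shows "principal_ideal_domain TYPE('a)"
proof (rule ccontr)
  define N where "N = {I::'a set. is_ideal I \<and> \<not>(\<exists>d. I = gen_ideal {d})}"
  assume "\<not> principal_ideal_domain TYPE('a)"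
  then obtain I0 where I0: "I0 \<in> N" unfolding principal_ideal_domain_def N_def by auto
  have "\<forall>C\<in>chains N. \<exists>U\<in>N. \<forall>X\<in>C. X \<subseteq> U"
  proof
    fix C assume C: "C \<in> chains N"
    show "\<exists>U\<in>N. \<forall>X\<in>C. X \<subseteq> U"
    proof (cases "C = {}")
      case True then show ?thesis using I0 by auto
    next
      case False
      have CN: "C \<subseteq> N" and ch: "\<forall>X\<in>C. \<forall>Y\<in>C. X \<subseteq> Y \<or> Y \<subseteq> X"
        using C unfolding chains_def chain_subset_def by auto
      have idl: "\<And>X. X \<in> C \<Longrightarrow> is_ideal X" using CN N_def by auto
      have "is_ideal (\<Union>C)"
        unfolding is_ideal_def
      proof (intro conjI ballI allI)
        show "0 \<in> \<Union>C" using False idl ideal_0 by blast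
        fix x y assume "x \<in> \<Union>C" "y \<in> \<Union>C"
        then obtain X Y where "X \<in> C" "Y \<in> C" "x \<in> X" "y \<in> Y" by auto
        then show "x + y \<in> \<Union>C" using ch idl ideal_add
          by (metis UnionI subset_iff)
      next
        fix r x assume "x \<in> \<Union>C"
        then show "r * x \<in> \<Union>C" using idl ideal_mult by blast
      qed
      moreover have "\<not>(\<exists>d. \<Union>C = gen_ideal {d})"
      proof
        assume "\<exists>d. \<Union>C = gen_ideal {d}"
        then obtain d where d: "\<Union>C = gen_ideal {d}" by auto
        then have "d \<in> \<Union>C" using gen_ideal_sub by auto
        then obtain X where X: "X \<in> C" "d \<in> X" by auto
        then have "gen_ideal {d} \<subseteq> X" using idl[OF X(1)] gen_ideal_least[of X "{d}"] by blast
        then have "X = gen_ideal {d}" using d X by auto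
        then show False using X CN N_def by auto
      qed
      ultimately show ?thesis unfolding N_def by auto
    qed
  qed
  from Zorn_Lemma2[OF this] obtain M where M: "M \<in> N" and Mmax: "\<And>X. X \<in> N \<Longrightarrow> M \<subseteq> X \<Longrightarrow> X = M"
    by blast
  have Mi: "is_ideal M" and Mnp: "\<And>d. M \<noteq> gen_ideal {d}" using M N_def by auto
  have "M \<noteq> UNIV"
  proof
    assume "M = UNIV"
    moreover have "gen_ideal {1::'a} = UNIV" by (auto simp: gen_single)
    ultimately show False using Mnp by metis
  qed
  moreover have "a * b \<in> M \<longrightarrow> a \<in> M \<or> b \<in> M" for a b
  proof (rule ccontr)
    assume "\<not> ?thesis"
    then have ab: "a * b \<in> M" "a \<notin> M" "b \<notin> M" by auto
    define I1 where "I1 = gen_ideal (insert a M)"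
    have "M \<subseteq> I1" "a \<in> I1" using gen_ideal_sub[of "insert a M"] I1_def by auto
    then have "I1 \<notin> N" using Mmax ab(2) by blast
    then obtain c where c: "I1 = gen_ideal {c}" using N_def I1_def gen_ideal_is_ideal by auto
    have "is_ideal {x. b * x \<in> M}"
      unfolding is_ideal_def using Mi ideal_0 ideal_add ideal_mult[OF Mi]
      by (auto simp: distrib_left mult.left_commute[of b])
    moreover have "insert a M \<subseteq> {x. b * x \<in> M}"
      using ab Mi ideal_mult by (auto simp: mult.commute)
    ultimately have "I1 \<subseteq> {x. b * x \<in> M}" unfolding I1_def by (rule gen_ideal_least)
    moreover have "c \<in> I1" using c gen_ideal_sub by auto
    ultimately have bc: "b * c \<in> M" by auto
    define J where "J = {r. r * c \<in> M}"
    have Ji: "is_ideal J"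
      unfolding is_ideal_def J_def using Mi ideal_0 ideal_add ideal_mult[OF Mi]
      by (auto simp: distrib_right mult.assoc)
    have "M \<subseteq> J" unfolding J_def using Mi ideal_mult2 by auto
    moreover have "b \<in> J" unfolding J_def using bc by (simp add: mult.commute)
    ultimately have "J \<notin> N" using Mmax ab(3) by blast
    then obtain d where d: "J = gen_ideal {d}" using N_def Ji by auto
    have "d \<in> J" using d gen_ideal_sub by auto
    then have dc: "d * c \<in> M" unfolding J_def by auto
    have "M = gen_ideal {d * c}"
    proof
      show "gen_ideal {d * c} \<subseteq> M" using dc Mi gen_ideal_least[of M "{d * c}"] by blast
      show "M \<subseteq> gen_ideal {d * c}"
      proof
        fix m assume m: "m \<in> M"
        then have "m \<in> gen_ideal {c}" using \<open>M \<subseteq> I1\<close> c by auto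
        then obtain s where s: "m = s * c" by (auto simp: gen_single)
        then have "s \<in> J" using m J_def by auto
        then obtain t where "s = t * d" using d by (auto simp: gen_single)
        then have "m = t * (d * c)" using s by (simp add: mult.assoc)
        then show "m \<in> gen_ideal {d * c}" by (auto simp: gen_single)
      qed
    qed
    then show False using Mnp by blast
  qed
  ultimately have "is_prime_ideal M" using Mi is_prime_ideal_def by blast
  then show False using assms Mnp by blast
qed


lemma gen_list: "gen_ideal (set (b # replicate k (0::'a::comm_ring_1))) = gen_ideal {b}"
proof -
  have "set (b # replicate k (0::'a)) - {0} = {b} - {0}" by auto
  then show ?thesis by (metis gen_minus0)
qed

lemma rf_prime_principal:
  fixes P :: "'a::idom set"
  assumes bez: "bezout_domain TYPE('a)" and rf: "radically_finite TYPE('a)"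
    and P: "is_prime_ideal P"
  shows "\<exists>d. P = gen_ideal {d}"
proof -
  define S where "S = {A. (\<exists>\<theta>s :: 'a list. enat (length \<theta>s) = ht P \<and> A = gen_ideal (set \<theta>s))
                     \<and> radical A = P}"
  note h = rf[unfolded radically_finite_def, rule_format, OF P, THEN conjunct2, unfolded Let_def, folded S_def]
  from h obtain A where AS: "A \<in> S" and Amax: "\<not> (\<exists>B\<in>S. A \<subset> B)"
    by (elim bexE conjE) blast
  then obtain \<theta>s where th: "enat (length \<theta>s) = ht P" "A = gen_ideal (set \<theta>s)" and rA: "radical A = P"
    unfolding S_def by auto
  have bz: "\<And>S::'a set. finite S \<Longrightarrow> \<exists>d. gen_ideal S = gen_ideal {d}"
    using bez unfolding bezout_domain_def by blast
  obtain a where a: "A = gen_ideal {a}" using bz[of "set \<theta>s"] th(2) by auto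
  have Pi: "is_ideal P" using P is_prime_ideal_def by auto
  show ?thesis
  proof (cases "\<theta>s = []")
    case True
    then have "A = {0}" using th gen_empty by auto
    then have "P = {0}" using rA radical_zero by auto
    then show ?thesis using gen_empty gen_minus0[of "{0::'a}"] by auto
  next
    case False
    have AP: "A \<subseteq> P" using rA radical_sub by auto
    have "P \<subseteq> A"
    proof
      fix x assume xP: "x \<in> P"
      show "x \<in> A"
      proof (rule ccontr)
        assume xA: "x \<notin> A"
        obtain b where b: "gen_ideal {a, x} = gen_ideal {b}" using bz[of "{a, x}"] by auto
        define B where "B = gen_ideal (set (b # replicate (length \<theta>s - 1) 0))"
        have Bb: "B = gen_ideal {a, x}" unfolding B_def gen_list b by (rule refl)
        have "a \<in> A" using a gen_ideal_sub by auto
        then have "{a, x} \<subseteq> P" using AP xP by auto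
        then have BP: "B \<subseteq> P" unfolding Bb by (rule gen_ideal_least[OF Pi])
        have "{a} \<subseteq> B" using Bb gen_ideal_sub[of "{a,x}"] by auto
        then have AB: "A \<subseteq> B" unfolding a by (rule gen_ideal_least[OF gen_ideal_is_ideal[of "{a,x}"], folded Bb])
        have xB: "x \<in> B" using Bb gen_ideal_sub[of "{a,x}"] by auto
        have "radical B \<subseteq> P" using radical_mono[OF BP] radical_prime[OF P] by simp
        moreover have "P \<subseteq> radical B" using radical_mono[OF AB] rA by simp
        ultimately have rB: "radical B = P" by (rule equalityI)
        have len: "enat (length (b # replicate (length \<theta>s - 1) 0)) = ht P"
          using False th(1) by simp
        have "B \<in> S" unfolding S_def using len rB B_def by blast
        moreover have "A \<subset> B" using AB xB xA by auto
        ultimately show False using Amax by blast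
      qed
    qed
    then show ?thesis using AP a by auto
  qed
qed


lemma pid_principal: "principal_ideal_domain TYPE('a::idom) \<Longrightarrow> is_ideal (I::'a set) \<Longrightarrow> \<exists>d. I = gen_ideal {d}"
  unfolding principal_ideal_domain_def by blast

lemma prime_contains0: "is_prime_ideal P \<Longrightarrow> 0 \<in> P"
  by (simp add: is_prime_ideal_def ideal_0)

lemma zero_prime: "is_prime_ideal {0::'a::idom}"
proof -
  have "{0::'a} \<noteq> UNIV" by (metis UNIV_I one_neq_zero singletonD)
  then show ?thesis unfolding is_prime_ideal_def is_ideal_def by auto
qed

lemma pid_max:
  fixes P Q :: "'a::idom set"
  assumes pid: "principal_ideal_domain TYPE('a)" and P: "is_prime_ideal P" and Q: "is_prime_ideal Q"
    and P0: "P \<noteq> {0}" and PQ: "P \<subset> Q"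
  shows False
proof -
  have Pi: "is_ideal P" and Qi: "is_ideal Q" using P Q is_prime_ideal_def by auto
  obtain p where p: "P = gen_ideal {p}" using pid_principal[OF pid Pi] by blast
  obtain q where q: "Q = gen_ideal {q}" using pid_principal[OF pid Qi] by blast
  have "p \<noteq> 0" using p P0 gen_minus0[of "{0::'a}"] gen_empty by auto
  have "p \<in> Q" using PQ p gen_ideal_sub by auto
  then obtain r where r: "p = r * q" using q by (auto simp: gen_single)
  have "q \<notin> P"
  proof
    assume "q \<in> P"
    then have "Q \<subseteq> P" unfolding q using gen_ideal_least[OF Pi, of "{q}"] by blast
    then show False using PQ by auto
  qed
  moreover have "r * q \<in> P" using r p gen_ideal_sub by auto
  ultimately have "r \<in> P" using P is_prime_ideal_def by blast
  then obtain s where s: "r = s * p" using p by (auto simp: gen_single)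
  have "p = p * (s * q)" using r s by (metis mult.assoc mult.commute)
  then have "p * (1 - s * q) = 0" by (simp add: right_diff_distrib)
  then have sq: "s * q = 1" using \<open>p \<noteq> 0\<close> by simp
  have "\<forall>x. x \<in> Q"
  proof
    fix x
    have "x = (x * s) * q" using sq by (simp add: mult.assoc)
    then show "x \<in> Q" unfolding q gen_single by (metis rangeI)
  qed
  then have "Q = UNIV" by auto
  then show False using Q is_prime_ideal_def by blast
qed

lemma prime_height_zero: "prime_height {0::'a::idom} = 0"
proof -
  have "{n. \<exists>f :: nat \<Rightarrow> 'a set. (\<forall>i\<le>n. is_prime_ideal (f i)) \<and> (\<forall>i<n. f i \<subset> f (Suc i)) \<and> f n = {0}} = {0}"
  proof (intro equalityI subsetI)
    fix n assume "n \<in> {n. \<exists>f :: nat \<Rightarrow> 'a set. (\<forall>i\<le>n. is_prime_ideal (f i)) \<and> (\<forall>i<n. f i \<subset> f (Suc i)) \<and> f n = {0}}"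
    then obtain f :: "nat \<Rightarrow> 'a set" where f: "\<forall>i\<le>n. is_prime_ideal (f i)" "\<forall>i<n. f i \<subset> f (Suc i)" "f n = {0}" by auto
    show "n \<in> {0}"
    proof (rule ccontr)
      assume "n \<notin> {0}"
      then obtain m where m: "n = Suc m" by (cases n) auto
      then have "f m \<subset> {0}" using f by auto
      moreover have "0 \<in> f m" using f(1) m prime_contains0[of "f m"] by auto
      ultimately show False by auto
    qed
  next
    fix n assume "n \<in> {0::nat}"
    then show "n \<in> {n. \<exists>f :: nat \<Rightarrow> 'a set. (\<forall>i\<le>n. is_prime_ideal (f i)) \<and> (\<forall>i<n. f i \<subset> f (Suc i)) \<and> f n = {0}}"
      using zero_prime by (auto intro!: exI[of _ "\<lambda>_. {0}"])
  qed
  then show ?thesis unfolding prime_height_def by (simp add: zero_enat_def)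
qed

lemma prime_height_one:
  fixes Q :: "'a::idom set"
  assumes pid: "principal_ideal_domain TYPE('a)" and Q: "is_prime_ideal Q" and Q0: "Q \<noteq> {0}"
  shows "prime_height Q = 1"
proof -
  have "{n. \<exists>f :: nat \<Rightarrow> 'a set. (\<forall>i\<le>n. is_prime_ideal (f i)) \<and> (\<forall>i<n. f i \<subset> f (Suc i)) \<and> f n = Q} = {0, 1}"
  proof (intro equalityI subsetI)
    fix n assume "n \<in> {n. \<exists>f :: nat \<Rightarrow> 'a set. (\<forall>i\<le>n. is_prime_ideal (f i)) \<and> (\<forall>i<n. f i \<subset> f (Suc i)) \<and> f n = Q}"
    then obtain f :: "nat \<Rightarrow> 'a set" where f: "\<forall>i\<le>n. is_prime_ideal (f i)" "\<forall>i<n. f i \<subset> f (Suc i)" "f n = Q" by auto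
    show "n \<in> {0, 1}"
    proof (rule ccontr)
      assume "n \<notin> {0, 1}"
      then obtain m where m: "n = Suc (Suc m)" by (metis insertCI not0_implies_Suc One_nat_def)
      have a: "f m \<subset> f (Suc m)" using f(2) m by auto
      have b: "f (Suc m) \<subset> Q" using f(2,3) m by auto
      have "0 \<in> f m" using f(1) m prime_contains0[of "f m"] by auto
      then have "f (Suc m) \<noteq> {0}" using a by auto
      moreover have "is_prime_ideal (f (Suc m))" using f(1) m by auto
      ultimately show False using pid_max[OF pid _ Q _ b] by blast
    qed
  next
    fix n assume "n \<in> {0::nat, 1}"
    moreover have "(0::nat) \<in> {n. \<exists>f :: nat \<Rightarrow> 'a set. (\<forall>i\<le>n. is_prime_ideal (f i)) \<and> (\<forall>i<n. f i \<subset> f (Suc i)) \<and> f n = Q}"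
      using Q by (auto intro!: exI[of _ "\<lambda>_. Q"])
    moreover have "(1::nat) \<in> {n. \<exists>f :: nat \<Rightarrow> 'a set. (\<forall>i\<le>n. is_prime_ideal (f i)) \<and> (\<forall>i<n. f i \<subset> f (Suc i)) \<and> f n = Q}"
    proof -
      have "\<forall>i\<le>1. is_prime_ideal ((\<lambda>i::nat. if i = 0 then {0} else Q) i)"
        using Q zero_prime by (auto simp: le_Suc_eq)
      moreover have "\<forall>i<1. (\<lambda>i::nat. if i = 0 then {0} else Q) i \<subset> (\<lambda>i::nat. if i = 0 then {0} else Q) (Suc i)"
        using Q0 prime_contains0[OF Q] by auto
      ultimately show ?thesis by (auto intro!: exI[of _ "\<lambda>i::nat. if i = 0 then {0} else Q"])
    qed
    ultimately show "n \<in> {n. \<exists>f :: nat \<Rightarrow> 'a set. (\<forall>i\<le>n. is_prime_ideal (f i)) \<and> (\<forall>i<n. f i \<subset> f (Suc i)) \<and> f n = Q}"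
      by auto
  qed
  then show ?thesis unfolding prime_height_def by (simp add: zero_enat_def one_enat_def sup_enat_def)
qed

lemma ht_prime:
  fixes P :: "'a::idom set"
  assumes pid: "principal_ideal_domain TYPE('a)" and P: "is_prime_ideal P"
  shows "ht P = (if P = {0} then 0 else 1)"
proof (cases "P = {0}")
  case True
  have "ht P \<le> prime_height P" unfolding ht_def using P by (auto intro: INF_lower)
  then show ?thesis using True prime_height_zero by (metis le_zero_eq)
next
  case False
  have "ht P = 1" unfolding ht_def
  proof (rule INF_eq_const)
    show "{Q. is_prime_ideal Q \<and> P \<subseteq> Q} \<noteq> {}" using P by auto
    fix Q assume "Q \<in> {Q. is_prime_ideal Q \<and> P \<subseteq> Q}"
    then show "prime_height Q = 1" using prime_height_one[OF pid] False prime_contains0[OF P] by auto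
  qed
  then show ?thesis using False by simp
qed

lemma pid_rf:
  assumes pid: "principal_ideal_domain TYPE('a::idom)"
  shows "radically_finite TYPE('a)"
  unfolding radically_finite_def Let_def
proof (intro allI impI conjI)
  fix P :: "'a set" assume P: "is_prime_ideal P"
  have Pi: "is_ideal P" using P is_prime_ideal_def by auto
  obtain p where p: "P = gen_ideal {p}" using pid_principal[OF pid Pi] by blast
  define \<theta>s where "\<theta>s = (if P = {0} then [] else [p])"
  have Pg: "P = gen_ideal (set \<theta>s)" using p gen_empty \<theta>s_def by auto
  have len: "enat (length \<theta>s) = ht P" using ht_prime[OF pid P] \<theta>s_def
    by (simp add: zero_enat_def one_enat_def)
  have rP: "radical P = P" using radical_prime[OF P] .
  show "radically_perfect P"
    unfolding radically_perfect_def
  proof (cases "P = {0}")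
    case True
    have h0: "ht P = 0" using ht_prime[OF pid P] True by simp
    have "(INF n \<in> {n. \<exists>\<theta>s :: 'a list. length \<theta>s = n \<and> radical P = radical (gen_ideal (set \<theta>s))}. enat n) \<le> enat 0"
    proof (rule INF_lower)
      have "length ([]::'a list) = 0 \<and> radical P = radical (gen_ideal (set ([]::'a list)))"
        using True by (simp add: gen_empty)
      then show "0 \<in> {n. \<exists>\<theta>s :: 'a list. length \<theta>s = n \<and> radical P = radical (gen_ideal (set \<theta>s))}"
        by blast
    qed
    then have eq: "ht P = (INF n \<in> {n. \<exists>\<theta>s :: 'a list. length \<theta>s = n \<and> radical P = radical (gen_ideal (set \<theta>s))}. enat n)"
      unfolding h0 enat_0 by (simp only: le_zero_eq)
    have zd: "zero_divisor (0::'a)" unfolding zero_divisor_def by (rule exI[of _ 1]) simp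
    have r0: "radical P = radical (gen_ideal {0})"
    proof -
      have "gen_ideal {0::'a} = {0}" using gen_minus0[of "{0::'a}"] gen_empty by simp
      then show ?thesis using True by simp
    qed
    show "ht P = (INF n \<in> {n. \<exists>\<theta>s :: 'a list. length \<theta>s = n \<and> radical P = radical (gen_ideal (set \<theta>s))}. enat n) \<and>
     (ht P = 0 \<longrightarrow> (\<exists>\<theta>. zero_divisor \<theta> \<and> radical P = radical (gen_ideal {\<theta>})))"
      by (rule conjI[OF eq]) (intro impI exI[of _ 0] conjI zd r0)
  next
    case False
    have h1: "ht P = 1" using ht_prime[OF pid P] False by simp
    have "(INF n \<in> {n. \<exists>\<theta>s :: 'a list. length \<theta>s = n \<and> radical P = radical (gen_ideal (set \<theta>s))}. enat n) = 1"
    proof (rule antisym)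
      show "(INF n \<in> {n. \<exists>\<theta>s :: 'a list. length \<theta>s = n \<and> radical P = radical (gen_ideal (set \<theta>s))}. enat n) \<le> 1"
        unfolding one_enat_def by (rule INF_lower) (use p in \<open>auto intro!: exI[of _ "[p]"]\<close>)
      show "1 \<le> (INF n \<in> {n. \<exists>\<theta>s :: 'a list. length \<theta>s = n \<and> radical P = radical (gen_ideal (set \<theta>s))}. enat n)"
      proof (rule INF_greatest)
        fix n assume "n \<in> {n. \<exists>\<theta>s :: 'a list. length \<theta>s = n \<and> radical P = radical (gen_ideal (set \<theta>s))}"
        then obtain ts :: "'a list" where ts: "length ts = n" "radical P = radical (gen_ideal (set ts))" by auto
        have "n \<noteq> 0"
        proof
          assume "n = 0"
          then have "ts = []" using ts by auto
          then have "P = {0}" using ts rP gen_empty radical_zero by auto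
          then show False using False by auto
        qed
        then show "1 \<le> enat n" unfolding one_enat_def enat_ord_simps(1) by simp
      qed
    qed
    then show "ht P = (INF n \<in> {n. \<exists>\<theta>s :: 'a list. length \<theta>s = n \<and> radical P = radical (gen_ideal (set \<theta>s))}. enat n) \<and>
     (ht P = 0 \<longrightarrow> (\<exists>\<theta>. zero_divisor \<theta> \<and> radical P = radical (gen_ideal {\<theta>})))" using h1 by auto
  qed
  define S where "S = {A. (\<exists>\<theta>s :: 'a list. enat (length \<theta>s) = ht P \<and> A = gen_ideal (set \<theta>s)) \<and> radical A = P}"
  have PS: "P \<in> S" unfolding S_def using len Pg rP by blast
  have nomax: "\<not> (\<exists>B\<in>S. P \<subset> B)"
  proof
    assume "\<exists>B\<in>S. P \<subset> B"
    then obtain B where "B \<in> S" "P \<subset> B" by blast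
    then show False unfolding S_def using radical_sub[of B] by auto
  qed
  have fin: "\<forall>C. C \<subseteq> {J. is_ideal J \<and> P \<subseteq> J \<and> J \<subseteq> P} \<and> (\<forall>J\<in>C. \<forall>K\<in>C. J \<subseteq> K \<or> K \<subseteq> J) \<longrightarrow> finite C"
  proof (intro allI impI)
    fix C assume "C \<subseteq> {J. is_ideal J \<and> P \<subseteq> J \<and> J \<subseteq> P} \<and> (\<forall>J\<in>C. \<forall>K\<in>C. J \<subseteq> K \<or> K \<subseteq> J)"
    then have "C \<subseteq> {P}" by auto
    then show "finite C" using finite_subset by blast
  qed
  show "\<exists>A\<in>{A. (\<exists>\<theta>s. enat (length \<theta>s) = ht P \<and> A = gen_ideal (set \<theta>s)) \<and> radical A = P}.
            \<not> (\<exists>B\<in>{A. (\<exists>\<theta>s. enat (length \<theta>s) = ht P \<and> A = gen_ideal (set \<theta>s)) \<and> radical A = P}. A \<subset> B) \<and>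
            (\<forall>C. C \<subseteq> {J. is_ideal J \<and> A \<subseteq> J \<and> J \<subseteq> P} \<and> (\<forall>J\<in>C. \<forall>K\<in>C. J \<subseteq> K \<or> K \<subseteq> J) \<longrightarrow> finite C)"
    unfolding S_def[symmetric] by (rule bexI[of _ P]) (use nomax fin PS in auto)
qed


theorem corollary2p4:
  assumes "bezout_domain TYPE('a::idom)"
    and "krull_dim TYPE('a) \<noteq> \<infinity>"
  shows "radically_finite TYPE('a) \<longleftrightarrow> principal_ideal_domain TYPE('a)"
proof
  assume "radically_finite TYPE('a)"
  then show "principal_ideal_domain TYPE('a)"
    using rf_prime_principal[OF assms(1)] kaplansky by blast
next
  assume "principal_ideal_domain TYPE('a)"
  then show "radically_finite TYPE('a)" by (rule pid_rf)
qed

end
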